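(* Let $\mathbb{F}$ be a field of characteristic zero, $d\ge 1$, $n\geq 2$, and let $\mathbf{b}=(b_1,\dots,b_n)\in\mathbb{N}_+^n$ with $b_1=1$ and $b_n>\dots>b_2\geq 2$. Let $\mathbf{c}_i=(c_{i,1},\dots,c_{i,n})\in\mathbb{F}^n$ for $i=1,\dots,d$, where $c_{1,1},\dots,c_{d,1}$ are not all zero. For $m=0,1,\dots,b_n$ let $$q_{n,m}=\sum_{\tau(\pmb\gamma_1,\dots,\pmb\gamma_d)=m}\frac{\mathbf{c}_1^{\pmb\gamma_1}\cdots\mathbf{c}_d^{\pmb\gamma_d}}{\pmb\gamma_1!\cdots\pmb\gamma_d!}x_1^{|\pmb\gamma_1|}\cdots x_d^{|\pmb\gamma_d|}\in\mathbb{F}[x_1,\dots,x_d],$$ and let $Q=\mathrm{span}\{q_{n,m}: m=0,1,\dots,b_n\}$ (a $D$-invariant subspace). Then the breadth of $Q$ is $1$.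
   Context: The sum runs over $\pmb\gamma_i=(\gamma_{i,1},\dots,\gamma_{i,n})\in\mathbb{N}^n$ ($i=1,\dots,d$), with $|\pmb\gamma_i|=\sum_j\gamma_{i,j}$, $\pmb\gamma_i!=\prod_j\gamma_{i,j}!$, $\mathbf{c}_i^{\pmb\gamma_i}=\prod_{j=1}^n c_{i,j}^{\gamma_{i,j}}$ (with the convention $0^0=1$), and $\tau(\pmb\gamma_1,\dots,\pmb\gamma_d)=\sum_{j=1}^n b_j\sum_{i=1}^d\gamma_{i,j}$. A polynomial subspace is $D$-invariant if it is closed under all partial derivatives $\partial/\partial x_j$. The breadth of a $D$-invariant polynomial subspace is the number of linear polynomials in a basis of it, maximized over bases; concretely it is the dimension of the space of degree-one homogeneous parts of the polynomials of total degree at most one in the subspace. *)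

theory Defs
  imports Complex_Main "HOL-Library.Function_Algebras"
begin

text \<open>Polynomials in the variables x_0,...,x_{d-1} over a field are represented by their
  coefficient functions: a polynomial is a map from exponent vectors
  (alpha :: nat => nat, alpha i = exponent of x_i) to coefficients.
  Indices are 0-based: variables 0..d-1, coordinates 0..n-1.\<close>

type_synonym 'a mpoly_coeffs = "(nat \<Rightarrow> nat) \<Rightarrow> 'a"

definition fscale :: "'a::field \<Rightarrow> ('b \<Rightarrow> 'a) \<Rightarrow> ('b \<Rightarrow> 'a)" where
  "fscale a f = (\<lambda>x. a * f x)"

lemma vector_space_fscale: "vector_space (fscale :: 'a::field \<Rightarrow> ('b \<Rightarrow> 'a) \<Rightarrow> _)"
  by unfold_locales (auto simp: fscale_def algebra_simps fun_eq_iff)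

definition tau :: "nat \<Rightarrow> nat \<Rightarrow> (nat \<Rightarrow> nat) \<Rightarrow> (nat \<Rightarrow> nat \<Rightarrow> nat) \<Rightarrow> nat" where
  "tau n d b \<Gamma> = (\<Sum>j<n. b j * (\<Sum>i<d. \<Gamma> i j))"

definition q_poly :: "nat \<Rightarrow> nat \<Rightarrow> (nat \<Rightarrow> nat) \<Rightarrow> (nat \<Rightarrow> nat \<Rightarrow> 'a::field_char_0)
    \<Rightarrow> nat \<Rightarrow> 'a mpoly_coeffs" where
  "q_poly n d b c m \<alpha> =
     (\<Sum>\<Gamma> \<in> {\<Gamma>. (\<forall>i j. (d \<le> i \<or> n \<le> j) \<longrightarrow> \<Gamma> i j = 0)
               \<and> (\<forall>i. d \<le> i \<longrightarrow> \<alpha> i = 0)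
               \<and> (\<forall>i<d. (\<Sum>j<n. \<Gamma> i j) = \<alpha> i)
               \<and> tau n d b \<Gamma> = m}.
        (\<Prod>i<d. \<Prod>j<n. c i j ^ \<Gamma> i j / fact (\<Gamma> i j)))"

text \<open>Q = span{q_{n,m} : m = 0..b_n}, where b_n = b (n-1) in 0-based indexing.\<close>
definition Q_space :: "nat \<Rightarrow> nat \<Rightarrow> (nat \<Rightarrow> nat) \<Rightarrow> (nat \<Rightarrow> nat \<Rightarrow> 'a::field_char_0)
    \<Rightarrow> 'a mpoly_coeffs set" where
  "Q_space n d b c =
     {p. \<exists>a :: nat \<Rightarrow> 'a. p = (\<lambda>\<alpha>. \<Sum>m\<le>b (n - 1). a m * q_poly n d b c m \<alpha>)}"

definition deg_le_one :: "nat \<Rightarrow> 'a::zero mpoly_coeffs \<Rightarrow> bool" where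
  "deg_le_one d p \<longleftrightarrow>
     (\<forall>\<alpha>. p \<alpha> \<noteq> 0 \<longrightarrow> (\<forall>i. d \<le> i \<longrightarrow> \<alpha> i = 0) \<and> (\<Sum>i<d. \<alpha> i) \<le> 1)"

definition lin_part :: "nat \<Rightarrow> 'a::zero mpoly_coeffs \<Rightarrow> (nat \<Rightarrow> 'a)" where
  "lin_part d p = (\<lambda>j. if j < d then p (\<lambda>i. if i = j then 1 else 0) else 0)"

definition breadth :: "nat \<Rightarrow> 'a::field mpoly_coeffs set \<Rightarrow> nat" where
  "breadth d P = vector_space.dim (fscale :: 'a \<Rightarrow> (nat \<Rightarrow> 'a) \<Rightarrow> _)
                   (lin_part d ` {p \<in> P. deg_le_one d p})"

end

theory Submission
  imports Defs
begin

lemma tau_ge: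
  assumes "\<forall>j<n. 1 \<le> b j"
    and "\<forall>i<d. (\<Sum>j<n. \<Gamma> i j) = \<alpha> i"
  shows "(\<Sum>i<d. \<alpha> i) \<le> tau n d b \<Gamma>"
proof -
  have "(\<Sum>i<d. \<alpha> i) = (\<Sum>i<d. \<Sum>j<n. \<Gamma> i j)" using assms(2) by simp
  also have "\<dots> = (\<Sum>j<n. \<Sum>i<d. \<Gamma> i j)" by (rule sum.swap)
  also have "\<dots> \<le> (\<Sum>j<n. b j * (\<Sum>i<d. \<Gamma> i j))"
    by (rule sum_mono) (use assms(1) in auto)
  finally show ?thesis unfolding tau_def .
qed

lemma tau_eq:
  assumes "\<forall>j<n. 1 \<le> b j" and "\<forall>j. 1 \<le> j \<longrightarrow> j < n \<longrightarrow> 2 \<le> b j"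
    and "\<forall>i<d. (\<Sum>j<n. \<Gamma> i j) = \<alpha> i"
    and "tau n d b \<Gamma> = (\<Sum>i<d. \<alpha> i)"
    and "i < d" "1 \<le> j" "j < n"
  shows "\<Gamma> i j = 0"
proof (rule ccontr)
  assume ne: "\<Gamma> i j \<noteq> 0"
  have "(\<Sum>i<d. \<alpha> i) = (\<Sum>i<d. \<Sum>j<n. \<Gamma> i j)" using assms(3) by simp
  also have "\<dots> = (\<Sum>j<n. \<Sum>i<d. \<Gamma> i j)" by (rule sum.swap)
  also have "\<dots> < (\<Sum>j<n. b j * (\<Sum>i<d. \<Gamma> i j))"
  proof (rule sum_strict_mono_ex1[OF finite_lessThan])
    show "\<forall>x\<in>{..<n}. (\<Sum>i<d. \<Gamma> i x) \<le> b x * (\<Sum>i<d. \<Gamma> i x)"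
      using assms(1) by auto
    have "\<Gamma> i j \<le> (\<Sum>i<d. \<Gamma> i j)"
      using assms(5) by (intro member_le_sum) auto
    hence pos: "0 < (\<Sum>i<d. \<Gamma> i j)" using ne by linarith
    have "2 \<le> b j" using assms(2,6,7) by auto
    hence "(\<Sum>i<d. \<Gamma> i j) < b j * (\<Sum>i<d. \<Gamma> i j)" using pos
      by (metis Suc_1 Suc_le_lessD mult_1 mult_less_mono1)
    thus "\<exists>a\<in>{..<n}. (\<Sum>i<d. \<Gamma> i a) < b a * (\<Sum>i<d. \<Gamma> i a)"
      using assms(7) by auto
  qed
  finally show False using assms(4) unfolding tau_def by simp
qed

lemma q_zero:
  assumes "\<forall>j<n. 1 \<le> b j" and "m < (\<Sum>i<d. \<alpha> i)"
  shows "q_poly n d b c m \<alpha> = 0"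
proof -
  have E: "{\<Gamma>. (\<forall>i j. (d \<le> i \<or> n \<le> j) \<longrightarrow> \<Gamma> i j = 0)
               \<and> (\<forall>i. d \<le> i \<longrightarrow> \<alpha> i = 0)
               \<and> (\<forall>i<d. (\<Sum>j<n. \<Gamma> i j) = \<alpha> i)
               \<and> tau n d b \<Gamma> = m} = {}"
    using tau_ge[OF assms(1)] assms(2) by (auto simp del: sum.lessThan_Suc) (meson leD)
  show ?thesis unfolding q_poly_def E by simp
qed

lemma q_val:
  assumes "\<forall>j<n. 1 \<le> b j" and "\<forall>j. 1 \<le> j \<longrightarrow> j < n \<longrightarrow> 2 \<le> b j"
    and "b 0 = 1" and "0 < n"
    and sup: "\<forall>i. d \<le> i \<longrightarrow> \<alpha> i = 0" and msum: "(\<Sum>i<d. \<alpha> i) = m"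
  shows "q_poly n d b c m \<alpha> = (\<Prod>i<d. c i 0 ^ \<alpha> i / fact (\<alpha> i))"
proof -
  define \<Gamma>0 :: "nat \<Rightarrow> nat \<Rightarrow> nat" where "\<Gamma>0 = (\<lambda>i j. if i < d \<and> j = 0 then \<alpha> i else 0)"
  let ?G = "{\<Gamma>. (\<forall>i j. (d \<le> i \<or> n \<le> j) \<longrightarrow> \<Gamma> i j = 0)
               \<and> (\<forall>i. d \<le> i \<longrightarrow> \<alpha> i = 0)
               \<and> (\<forall>i<d. (\<Sum>j<n. \<Gamma> i j) = \<alpha> i)
               \<and> tau n d b \<Gamma> = m}"
  have sum0: "(\<Sum>j<n. (if j = 0 then x else 0)) = (x::nat)" for x
    using assms(4) by (subst sum.delta) auto
  have G: "?G = {\<Gamma>0}"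
  proof (intro equalityI subsetI)
    fix \<Gamma> assume "\<Gamma> \<in> ?G"
    hence h1: "\<forall>i j. (d \<le> i \<or> n \<le> j) \<longrightarrow> \<Gamma> i j = 0"
      and h3: "\<forall>i<d. (\<Sum>j<n. \<Gamma> i j) = \<alpha> i" and h4: "tau n d b \<Gamma> = m" by auto
    have z: "\<Gamma> i j = 0" if "\<not> (i < d \<and> j = 0)" for i j
    proof (cases "d \<le> i \<or> n \<le> j")
      case True thus ?thesis using h1 by auto
    next
      case False thus ?thesis using tau_eq[OF assms(1,2) h3] h4 msum that by auto
    qed
    have "\<Gamma> i j = \<Gamma>0 i j" for i j
    proof (cases "i < d \<and> j = 0")
      case True
      have "(\<Sum>j<n. \<Gamma> i j) = (\<Sum>j<n. (if j = 0 then \<Gamma> i 0 else 0))"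
        by (rule sum.cong) (use z in auto)
      thus ?thesis using True h3 sum0 unfolding \<Gamma>0_def by auto
    next
      case False thus ?thesis using z unfolding \<Gamma>0_def by auto
    qed
    thus "\<Gamma> \<in> {\<Gamma>0}" by auto
  next
    fix \<Gamma> assume "\<Gamma> \<in> {\<Gamma>0}"
    hence g: "\<Gamma> = \<Gamma>0" by simp
    have "tau n d b \<Gamma>0 = (\<Sum>j<n. (if j = 0 then b 0 * (\<Sum>i<d. \<alpha> i) else 0))"
      unfolding tau_def by (rule sum.cong) (auto simp: \<Gamma>0_def)
    also have "\<dots> = m" using sum0 assms(3) msum by simp
    finally show "\<Gamma> \<in> ?G" using g sup sum0 assms(4) by (auto simp: \<Gamma>0_def)
  qed
  have "q_poly n d b c m \<alpha> = (\<Prod>i<d. \<Prod>j<n. c i j ^ \<Gamma>0 i j / fact (\<Gamma>0 i j))"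
    unfolding q_poly_def G by simp
  also have "\<dots> = (\<Prod>i<d. \<Prod>j<n. (if j = 0 then c i 0 ^ \<alpha> i / fact (\<alpha> i) else 1))"
    by (intro prod.cong refl) (auto simp: \<Gamma>0_def)
  also have "\<dots> = (\<Prod>i<d. c i 0 ^ \<alpha> i / fact (\<alpha> i))"
    using assms(4) by (intro prod.cong refl) (subst prod.delta, auto)
  finally show ?thesis .
qed

theorem lemma3:
  fixes n d :: nat and b :: "nat \<Rightarrow> nat" and c :: "nat \<Rightarrow> nat \<Rightarrow> 'a::field_char_0"
  assumes "d \<ge> 1" and "n \<ge> 2"
    and "\<forall>j<n. b j > 0"
    and "b 0 = 1" and "b 1 \<ge> 2"
    and "\<forall>j k. 1 \<le> j \<longrightarrow> j < k \<longrightarrow> k < n \<longrightarrow> b j < b k"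
    and "\<exists>i<d. c i 0 \<noteq> 0"
  shows "breadth d (Q_space n d b c) = 1"
proof -
  interpret V: vector_space "fscale :: 'a \<Rightarrow> (nat \<Rightarrow> 'a) \<Rightarrow> _"
    by (rule vector_space_fscale)
  define B where "B = b (n - 1)"
  have b1: "\<forall>j<n. 1 \<le> b j" using assms(3) by (auto simp: Suc_le_eq)
  have b2: "\<forall>j. 1 \<le> j \<longrightarrow> j < n \<longrightarrow> 2 \<le> b j"
  proof (intro allI impI)
    fix j assume j: "1 \<le> j" "j < n"
    show "2 \<le> b j"
    proof (cases "j = 1")
      case True thus ?thesis using assms(5) by simp
    next
      case False thus ?thesis using assms(5) assms(6)[rule_format, of 1 j] j by simp
    qed
  qed
  have n0: "0 < n" using assms(2) by simp
  have B2: "2 \<le> B" unfolding B_def using b2 assms(2) by auto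
  obtain i0 where i0: "i0 < d" "c i0 0 \<noteq> 0" using assms(7) by auto
  define v :: "nat \<Rightarrow> 'a" where "v = (\<lambda>j. if j < d then c j 0 else 0)"
  define e :: "nat \<Rightarrow> nat \<Rightarrow> nat" where "e = (\<lambda>j i. if i = j then 1 else 0)"
  have esum: "(\<Sum>i<d. e j i) = 1" if "j < d" for j
    using that unfolding e_def by (subst sum.delta) auto
  have qe1: "q_poly n d b c 1 (e j) = c j 0" if "j < d" for j
  proof -
    have "q_poly n d b c 1 (e j) = (\<Prod>i<d. c i 0 ^ e j i / fact (e j i))"
      by (rule q_val[OF b1 b2 assms(4) n0]) (use that esum in \<open>auto simp: e_def\<close>)
    also have "\<dots> = (\<Prod>i<d. (if i = j then c j 0 else 1))"
      by (rule prod.cong) (auto simp: e_def)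
    also have "\<dots> = c j 0" using that by (subst prod.delta) auto
    finally show ?thesis .
  qed
  have qe0: "q_poly n d b c 0 (e j) = 0" if "j < d" for j
    by (rule q_zero[OF b1]) (use esum that in auto)
  let ?L = "lin_part d ` {p \<in> Q_space n d b c. deg_le_one d p}"
  define q1 where "q1 = q_poly n d b c 1"
  have q1Q: "q1 \<in> Q_space n d b c"
  proof -
    have "q1 = (\<lambda>\<alpha>. \<Sum>m\<le>b (n - 1). (if m = 1 then 1 else 0) * q_poly n d b c m \<alpha>)"
    proof
      fix \<alpha>
      have "(\<Sum>m\<le>b (n - 1). (if m = 1 then 1 else 0) * q_poly n d b c m \<alpha>)
           = (\<Sum>m\<le>b (n - 1). (if m = 1 then q_poly n d b c 1 \<alpha> else 0))"
        by (rule sum.cong) auto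
      also have "\<dots> = q1 \<alpha>" using B2 unfolding q1_def B_def by (subst sum.delta) auto
      finally show "q1 \<alpha> = (\<Sum>m\<le>b (n - 1). (if m = 1 then 1 else 0) * q_poly n d b c m \<alpha>)" by simp
    qed
    thus ?thesis unfolding Q_space_def by (intro CollectI exI)
  qed
  have q1deg: "deg_le_one d q1"
    unfolding deg_le_one_def
  proof (intro allI impI)
    fix \<alpha> assume ne: "q1 \<alpha> \<noteq> 0"
    show "(\<forall>i. d \<le> i \<longrightarrow> \<alpha> i = 0) \<and> (\<Sum>i<d. \<alpha> i) \<le> 1"
    proof (rule ccontr)
      assume "\<not> ?thesis"
      then consider "\<exists>i. d \<le> i \<and> \<alpha> i \<noteq> 0" | "1 < (\<Sum>i<d. \<alpha> i)" by force
      thus False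
      proof cases
        case 1
        hence "q1 \<alpha> = 0" unfolding q1_def q_poly_def by (metis (mono_tags, lifting) empty_Collect_eq sum.empty)
        thus False using ne by simp
      next
        case 2
        thus False using ne q_zero[OF b1] unfolding q1_def by blast
      qed
    qed
  qed
  have lq1: "lin_part d q1 = v"
    unfolding lin_part_def v_def q1_def using qe1 by (auto simp: e_def fun_eq_iff)
  have vL: "v \<in> ?L" using q1Q q1deg lq1 by force
  have Lspan: "?L \<subseteq> V.span {v}"
  proof
    fix w assume "w \<in> ?L"
    then obtain p where p: "p \<in> Q_space n d b c" "deg_le_one d p" and w: "w = lin_part d p" by auto
    obtain a where a: "p = (\<lambda>\<alpha>. \<Sum>m\<le>B. a m * q_poly n d b c m \<alpha>)"
      using p(1) unfolding Q_space_def B_def by auto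
    have az: "a m = 0" if "2 \<le> m" "m \<le> B" for m
    proof (rule ccontr)
      assume am: "a m \<noteq> 0"
      define S where "S = {m. 2 \<le> m \<and> m \<le> B \<and> a m \<noteq> 0}"
      have fS: "finite S" unfolding S_def by auto
      have "m \<in> S" using that am unfolding S_def by auto
      define M where "M = Max S"
      have MS: "M \<in> S" unfolding M_def using fS \<open>m \<in> S\<close> by (intro Max_in) auto
      have Mmax: "m' \<le> M" if "m' \<in> S" for m' unfolding M_def using fS that by auto
      define \<alpha> where "\<alpha> = (\<lambda>i. if i = i0 then M else 0)"
      have asum: "(\<Sum>i<d. \<alpha> i) = M" unfolding \<alpha>_def using i0 by (subst sum.delta) auto
      have asup: "\<forall>i. d \<le> i \<longrightarrow> \<alpha> i = 0" unfolding \<alpha>_def using i0 by auto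
      have qM: "q_poly n d b c M \<alpha> = c i0 0 ^ M / fact M"
      proof -
        have "q_poly n d b c M \<alpha> = (\<Prod>i<d. c i 0 ^ \<alpha> i / fact (\<alpha> i))"
          by (rule q_val[OF b1 b2 assms(4) n0 asup asum])
        also have "\<dots> = (\<Prod>i<d. (if i = i0 then c i0 0 ^ M / fact M else 1))"
          by (rule prod.cong) (auto simp: \<alpha>_def)
        also have "\<dots> = c i0 0 ^ M / fact M" using i0 by (subst prod.delta) auto
        finally show ?thesis .
      qed
      have "p \<alpha> = (\<Sum>m'\<le>B. (if m' = M then a M * (c i0 0 ^ M / fact M) else 0))"
        unfolding a
      proof (rule sum.cong[OF refl])
        fix m' assume m': "m' \<in> {..B}"
        show "a m' * q_poly n d b c m' \<alpha> = (if m' = M then a M * (c i0 0 ^ M / fact M) else 0)"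
        proof (cases "m' < M")
          case True thus ?thesis using q_zero[OF b1, where m=m' and d=d and c=c and \<alpha>=\<alpha>] asum by simp
        next
          case False
          show ?thesis
          proof (cases "m' = M")
            case True thus ?thesis using qM by simp
          next
            case F2: False
            hence "m' \<notin> S" using Mmax False by fastforce
            moreover have "2 \<le> m'" using MS False unfolding S_def by auto
            ultimately have "a m' = 0" using m' unfolding S_def by auto
            thus ?thesis using F2 by simp
          qed
        qed
      qed
      also have "\<dots> = a M * (c i0 0 ^ M / fact M)"
        using MS unfolding S_def by (subst sum.delta) auto
      finally have "p \<alpha> \<noteq> 0" using MS i0 unfolding S_def by simp
      hence "(\<Sum>i<d. \<alpha> i) \<le> 1" using p(2) unfolding deg_le_one_def by blast
      thus False using asum MS unfolding S_def by simp
    qed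
    have "w = fscale (a 1) v"
    proof
      fix j
      show "w j = fscale (a 1) v j"
      proof (cases "j < d")
        case False thus ?thesis unfolding w lin_part_def fscale_def v_def by simp
      next
        case True
        have "w j = (\<Sum>m\<le>B. a m * q_poly n d b c m (e j))"
          unfolding w lin_part_def a e_def using True by simp
        also have "\<dots> = (\<Sum>m\<le>B. (if m = 1 then a 1 * c j 0 else 0))"
        proof (rule sum.cong[OF refl])
          fix m assume m: "m \<in> {..B}"
          show "a m * q_poly n d b c m (e j) = (if m = 1 then a 1 * c j 0 else 0)"
            using az[of m] m qe0[OF True] qe1[OF True]
            by (cases "m = 0"; cases "m = 1") auto
        qed
        also have "\<dots> = a 1 * c j 0" using B2 by (subst sum.delta) auto
        finally show ?thesis unfolding fscale_def v_def using True by simp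
      qed
    qed
    thus "w \<in> V.span {v}" unfolding V.span_singleton by auto
  qed
  have vne: "v \<noteq> 0" using i0 unfolding v_def by (auto simp: fun_eq_iff)
  have ind: "V.independent {v}"
    by (rule V.independent_insertI) (use vne V.independent_empty in auto)
  show ?thesis unfolding breadth_def
    by (rule V.dim_unique[of "{v}"]) (use vL Lspan ind in auto)
qed

end
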